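(* For every positive integer $n$, the critical exponent satisfies $m(n)\ge n-2$.
   Context: A real $n$-by-$n$ matrix is doubly nonnegative if it is symmetric, positive semidefinite, and entry-wise nonnegative. For positive semidefinite $A=\sum_i\lambda_ix_ix_i^T$ (orthonormal eigenvectors) and $t>0$, $A^t=\sum_i\lambda_i^tx_ix_i^T$. The (conventional) critical exponent $m(n)$ is the least value $m$ such that $A^t$ is doubly nonnegative for all $t\ge m$ and all $n$-by-$n$ doubly nonnegative matrices $A$. *)

theory Defs
  imports "HOL-Analysis.Analysis"
begin

text \<open>n-by-n real matrices are rendered as real^'n^'n, with n = CARD('n).\<close>

definition doubly_nonnegative :: "real^'n^'n \<Rightarrow> bool" where
  "doubly_nonnegative A \<longleftrightarrow>
     transpose A = A \<and>
     (\<forall>x. 0 \<le> x \<bullet> (A *v x)) \<and>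
     (\<forall>i j. 0 \<le> A $ i $ j)"

definition outer_prod :: "real^'n \<Rightarrow> real^'n^'n" where
  "outer_prod x = (\<chi> i j. x $ i * x $ j)"

text \<open>Spectral decomposition with orthonormal eigenvectors x i and eigenvalues l i.\<close>
definition spectral_decomp :: "real^'n^'n \<Rightarrow> ('n \<Rightarrow> real) \<Rightarrow> ('n \<Rightarrow> real^'n) \<Rightarrow> bool" where
  "spectral_decomp A l x \<longleftrightarrow>
     (\<forall>i j. x i \<bullet> x j = (if i = j then 1 else 0)) \<and>
     A = (\<Sum>i\<in>UNIV. l i *\<^sub>R outer_prod (x i))"

text \<open>Real power of a positive semidefinite matrix: A^t = sum l_i^t x_i x_i^T
  (well defined, independent of the chosen decomposition, for PSD A and t > 0).\<close>
definition mat_rpow :: "real^'n^'n \<Rightarrow> real \<Rightarrow> real^'n^'n" where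
  "mat_rpow A t = (SOME B. \<exists>l x. spectral_decomp A l x \<and> (\<forall>i. 0 \<le> l i) \<and>
                     B = (\<Sum>i\<in>UNIV. (l i powr t) *\<^sub>R outer_prod (x i)))"

text \<open>Conventional critical exponent m(n) for n = CARD('n): the infimum (least value)
  of the exponents m > 0 such that A^t is doubly nonnegative for all t \<ge> m and all
  doubly nonnegative A; taken in ereal (infinity if no such m exists).\<close>
definition critical_exponent :: "'n::finite itself \<Rightarrow> ereal" where
  "critical_exponent _ = Inf (ereal ` {m. 0 < m \<and>
      (\<forall>t\<ge>m. \<forall>A::real^'n^'n. doubly_nonnegative A \<longrightarrow> doubly_nonnegative (mat_rpow A t))})"

end

theory Submission
  imports Defs
begin


lemma rolle':
  fixes f f' :: "real \<Rightarrow> real"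
  assumes d: "\<And>x. (f has_real_derivative f' x) (at x)" and "a < b" "f a = f b"
  shows "\<exists>z. a < z \<and> z < b \<and> f' z = 0"
proof -
  have c: "continuous_on {a..b} f"
    using d by (meson DERIV_continuous continuous_at_imp_continuous_on)
  obtain z where z: "a < z" "z < b" "DERIV f z :> 0"
    using Rolle[OF assms(2,3) c] d real_differentiable_def by blast
  then show ?thesis using DERIV_unique[OF z(3) d[of z]] by auto
qed

lemma rolle_many:
  fixes f f' :: "real \<Rightarrow> real"
  assumes d: "\<And>x. (f has_real_derivative f' x) (at x)"
  shows "finite Z \<Longrightarrow> card Z = Suc k \<Longrightarrow> (\<forall>z\<in>Z. f z = 0) \<Longrightarrow>
    \<exists>Z'. finite Z' \<and> card Z' = k \<and> (\<forall>z\<in>Z'. f' z = 0 \<and> z < Max Z)"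
proof (induction k arbitrary: Z)
  case 0
  then show ?case by (intro exI[of _ "{}"]) auto
next
  case (Suc k)
  define M where "M = Max Z"
  define Z0 where "Z0 = Z - {M}"
  have ne: "Z \<noteq> {}" using Suc.prems by auto
  have MZ: "M \<in> Z" using Suc.prems(1) ne M_def by auto
  have cZ0: "card Z0 = Suc k" using Suc.prems MZ Z0_def by auto
  have fZ0: "finite Z0" using Suc.prems Z0_def by auto
  have ne0: "Z0 \<noteq> {}" using cZ0 by auto
  obtain Z' where Z': "finite Z'" "card Z' = k" "\<forall>z\<in>Z'. f' z = 0 \<and> z < Max Z0"
    using Suc.IH[OF fZ0 cZ0] Suc.prems(3) Z0_def by auto
  have m0: "Max Z0 \<in> Z0" using fZ0 ne0 by auto
  have lt: "Max Z0 < M"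
    using m0 Z0_def M_def Suc.prems(1) by (metis DiffD1 DiffD2 Max_ge insertI1 order_le_neq_trans)
  obtain \<xi> where xi: "Max Z0 < \<xi>" "\<xi> < M" "f' \<xi> = 0"
    using rolle'[OF d lt] m0 MZ Suc.prems(3) Z0_def by auto
  have nin: "\<xi> \<notin> Z'" using Z'(3) xi(1) by force
  show ?case
    using Z' xi lt M_def nin
    by (intro exI[of _ "insert \<xi> Z'"]) auto
qed

lemma expsum_zero:
  fixes c s :: "'a \<Rightarrow> real"
  assumes "finite S"
  shows "inj_on s S \<Longrightarrow> finite Z \<Longrightarrow> card S \<le> card Z \<Longrightarrow>
    (\<forall>z\<in>Z. (\<Sum>j\<in>S. c j * exp (s j * z)) = 0) \<Longrightarrow> \<forall>j\<in>S. c j = 0"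
  using assms
proof (induction S arbitrary: c s Z rule: finite_induct)
  case empty
  then show ?case by simp
next
  case (insert a S)
  define h where "h t = (\<Sum>j\<in>insert a S. c j * exp ((s j - s a) * t))" for t
  define h' where "h' t = (\<Sum>j\<in>insert a S. c j * (s j - s a) * exp ((s j - s a) * t))" for t
  have hd: "(h has_real_derivative h' x) (at x)" for x
    unfolding h_def h'_def
    by (auto intro!: derivative_eq_intros DERIV_sum simp: algebra_simps)
  have h'S: "h' t = (\<Sum>j\<in>S. c j * (s j - s a) * exp ((s j - s a) * t))" for t
    unfolding h'_def using insert.hyps by simp
  have hg: "h t = exp (- s a * t) * (\<Sum>j\<in>insert a S. c j * exp (s j * t))" for t
    unfolding h_def sum_distrib_left
    by (rule sum.cong) (auto simp: exp_add[symmetric] algebra_simps)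
  have hz: "\<forall>z\<in>Z. h z = 0" using insert.prems(4) hg by simp
  have "Suc (card S) \<le> card Z" using insert.prems(3) insert.hyps by simp
  then obtain Z1 where Z1: "Z1 \<subseteq> Z" "card Z1 = Suc (card S)"
    using obtain_subset_with_card_n by metis
  have fZ1: "finite Z1" using Z1 insert.prems(2) finite_subset by blast
  obtain Z' where Z': "finite Z'" "card Z' = card S" "\<forall>z\<in>Z'. h' z = 0"
    using rolle_many[OF hd fZ1 Z1(2)] hz Z1(1) by blast
  have inj: "inj_on (\<lambda>j. s j - s a) S"
    using insert.prems(1) by (auto simp: inj_on_def)
  have "\<forall>j\<in>S. c j * (s j - s a) = 0"
    using insert.IH[OF inj Z'(1), of "\<lambda>j. c j * (s j - s a)"] Z'(2,3) h'S by simp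
  moreover have "\<forall>j\<in>S. s j \<noteq> s a"
    using insert.prems(1) insert.hyps by (auto simp: inj_on_def)
  ultimately have cS: "\<forall>j\<in>S. c j = 0" by simp
  obtain z where zZ: "z \<in> Z" using Z1 by fastforce
  have "(\<Sum>j\<in>insert a S. c j * exp (s j * z)) = c a * exp (s a * z)"
    using cS insert.hyps by simp
  then have "c a * exp (s a * z) = 0" using insert.prems(4) zZ by metis
  then have "c a = 0" by simp
  then show ?case using cS by simp
qed

lemma sign_lemma:
  fixes c s :: "'a \<Rightarrow> real" and N :: nat and g :: "real \<Rightarrow> real"
  assumes fS: "finite S" and inj: "inj_on s S" and cS: "card S \<le> N" and N2: "N \<ge> 2"
    and g_def: "g = (\<lambda>t. \<Sum>j\<in>S. c j * exp (s j * t))"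
    and zeros: "\<And>k::nat. k \<le> N - 2 \<Longrightarrow> g (real k) = 0"
    and pos: "g (real N - 1) > 0"
    and t: "real N - 3 < t" "t < real N - 2"
  shows "g t < 0"
proof (rule ccontr)
  assume "\<not> g t < 0"
  then have gt: "g t \<ge> 0" by simp
  define g' where "g' t = (\<Sum>j\<in>S. c j * s j * exp (s j * t))" for t
  have gd: "(g has_real_derivative g' x) (at x)" for x
    unfolding g_def g'_def
    by (auto intro!: derivative_eq_intros DERIV_sum simp: algebra_simps)
  have gc: "isCont g x" for x using gd DERIV_isCont by blast
  have noZ: False if "finite Z" "card S \<le> card Z" "\<forall>z\<in>Z. g z = 0" for Z
  proof -
    have "\<forall>j\<in>S. c j = 0"
      using expsum_zero[OF fS inj that(1,2)] that(3) g_def by auto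
    then have "g (real N - 1) = 0" unfolding g_def by simp
    then show False using pos by simp
  qed
  define Zi where "Zi = (\<lambda>k. real k) ` {..N-2}"
  have fZi: "finite Zi" unfolding Zi_def by simp
  have cZi: "card Zi = Suc (N - 2)" unfolding Zi_def
    by (subst card_image) (auto simp: inj_on_def)
  have zZi: "\<forall>z\<in>Zi. g z = 0" unfolding Zi_def using zeros by auto
  have MZi: "Max Zi = real N - 2"
  proof -
    have "real (N-2) \<in> Zi" unfolding Zi_def by auto
    moreover have "\<forall>z\<in>Zi. z \<le> real N - 2" unfolding Zi_def using N2 by auto
    ultimately show ?thesis using fZi N2
      by (metis Max_eqI of_nat_diff of_nat_numeral)
  qed
  have case1: False if z: "t \<le> z" "z < real N - 1" "z \<noteq> real N - 2" "g z = 0" for z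
  proof -
    have "z \<notin> Zi"
    proof
      assume "z \<in> Zi"
      then obtain k where k: "k \<le> N - 2" "z = real k" unfolding Zi_def by auto
      have "real k > real N - 3" using k z t by simp
      then have "real (k + 3) > real N" by simp
      then have "k + 3 > N" by linarith
      then have "k = N - 2" using k(1) by arith
      then have "real k = real N - 2" using N2 by (simp add: of_nat_diff)
      then show False using k z by simp
    qed
    then have "card (insert z Zi) = N" using cZi fZi N2 by simp
    then show False using noZ[of "insert z Zi"] fZi zZi z(4) cS by simp
  qed
  have gN2: "g (real N - 2) = 0"
    using zeros[of "N-2"] N2 by (simp add: of_nat_diff)
  define d where "d = min (real N - 2 - t) 1"
  have dpos: "d > 0" using t d_def by simp
  have locmin: "\<forall>y. \<bar>real N - 2 - y\<bar> < d \<longrightarrow> g (real N - 2) \<le> g y"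
  proof (intro allI impI)
    fix y assume y: "\<bar>real N - 2 - y\<bar> < d"
    show "g (real N - 2) \<le> g y"
    proof (rule ccontr)
      assume "\<not> ?thesis"
      then have gy: "g y < 0" using gN2 by simp
      consider "y < real N - 2" | "y = real N - 2" | "y > real N - 2" by linarith
      then show False
      proof cases
        case 1
        have "t \<le> y" using y d_def 1 by auto
        then obtain z where "t \<le> z" "z \<le> y" "g z = 0"
          using IVT2[of g y 0 t] gt gy gc by auto
        then show False using case1[of z] 1 by auto
      next
        case 2 then show False using gy gN2 by simp
      next
        case 3
        have "y < real N - 1" using y d_def 3 by auto
        then obtain z where "y \<le> z" "z \<le> real N - 1" "g z = 0"
          using IVT[of g y 0 "real N - 1"] pos gy gc by auto
        then show False using case1[of z] 3 pos t by (cases "z = real N - 1") auto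
      qed
    qed
  qed
  have g'0: "g' (real N - 2) = 0" using DERIV_local_min[OF gd dpos locmin] .
  have Sne: "S \<noteq> {}" using pos g_def by auto
  then obtain a where aS: "a \<in> S" by auto
  define h where "h t = exp (- s a * t) * g t" for t
  define h' where "h' t = (\<Sum>j\<in>S - {a}. c j * (s j - s a) * exp ((s j - s a) * t))" for t
  have hsum: "h t = (\<Sum>j\<in>S. c j * exp ((s j - s a) * t))" for t
    unfolding h_def g_def sum_distrib_left
    by (rule sum.cong) (auto simp: exp_add[symmetric] algebra_simps)
  have hd: "(h has_real_derivative h' x) (at x)" for x
  proof -
    have "(h has_real_derivative (\<Sum>j\<in>S. c j * (s j - s a) * exp ((s j - s a) * x))) (at x)"
      unfolding hsum[abs_def]
      by (auto intro!: derivative_eq_intros DERIV_sum simp: algebra_simps)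
    moreover have "(\<Sum>j\<in>S. c j * (s j - s a) * exp ((s j - s a) * x)) = h' x"
      unfolding h'_def using aS fS by (simp add: sum.remove)
    ultimately show ?thesis by simp
  qed
  have hd2: "(h has_real_derivative (- s a * exp (- s a * x) * g x + exp (- s a * x) * g' x)) (at x)" for x
    unfolding h_def[abs_def]
    by (auto intro!: derivative_eq_intros gd simp: algebra_simps)
  have h'N2: "h' (real N - 2) = 0"
    using DERIV_unique[OF hd hd2[of "real N - 2"]] gN2 g'0 by simp
  obtain Z' where Z': "finite Z'" "card Z' = N - 2" "\<forall>z\<in>Z'. h' z = 0 \<and> z < Max Zi"
    using rolle_many[OF hd fZi cZi] zZi h_def by auto
  have nin: "real N - 2 \<notin> Z'" using Z'(3) MZi by auto
  have inj': "inj_on (\<lambda>j. s j - s a) (S - {a})" using inj by (auto simp: inj_on_def)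
  have "card (S - {a}) \<le> card (insert (real N - 2) Z')"
    using nin Z' cS aS fS N2 by simp
  then have "\<forall>j\<in>S - {a}. c j * (s j - s a) = 0"
    using expsum_zero[OF _ inj', of "insert (real N - 2) Z'" "\<lambda>j. c j * (s j - s a)"]
      fS Z' h'N2 h'_def by auto
  moreover have "\<forall>j\<in>S - {a}. s j \<noteq> s a" using inj aS by (auto simp: inj_on_def)
  ultimately have c0: "\<forall>j\<in>S - {a}. c j = 0" by simp
  have gform: "g x = c a * exp (s a * x)" for x
    unfolding g_def using c0 aS fS by (simp add: sum.remove)
  have "g 0 = 0" using zeros[of 0] by simp
  then have "c a = 0" using gform[of 0] by simp
  then show False using gform[of "real N - 1"] pos by simp
qed




lemma outer_entry[simp]: "outer_prod x $ i $ j = x $ i * x $ j"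
  by (simp add: outer_prod_def)

lemma ortho_complete:
  fixes x :: "'n::finite \<Rightarrow> real^'n"
  assumes on: "\<forall>i j. x i \<bullet> x j = (if i = j then 1 else 0)"
  shows "(\<Sum>i\<in>UNIV. x i $ r * x i $ c) = (if r = c then 1 else 0)"
proof -
  define X :: "real^'n^'n" where "X = (\<chi> r i. x i $ r)"
  have "transpose X ** X = mat 1"
    using on by (simp add: vec_eq_iff X_def matrix_matrix_mult_def transpose_def mat_def inner_vec_def)
  then have "X ** transpose X = mat 1" using matrix_left_right_inverse by blast
  then have "(X ** transpose X) $ r $ c = mat 1 $ r $ c" by simp
  then show ?thesis
    by (simp add: X_def matrix_matrix_mult_def transpose_def mat_def)
qed

lemma ortho_expand:
  fixes x :: "'n::finite \<Rightarrow> real^'n"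
  assumes on: "\<forall>i j. x i \<bullet> x j = (if i = j then 1 else 0)"
  shows "v = (\<Sum>i\<in>UNIV. (x i \<bullet> v) *\<^sub>R x i)"
proof -
  have "(\<Sum>i\<in>UNIV. (x i \<bullet> v) * x i $ r) = v $ r" for r
  proof -
    have "(\<Sum>i\<in>UNIV. (x i \<bullet> v) * x i $ r) = (\<Sum>i\<in>UNIV. \<Sum>c\<in>UNIV. x i $ c * v $ c * x i $ r)"
      by (simp add: inner_vec_def sum_distrib_right)
    also have "\<dots> = (\<Sum>c\<in>UNIV. v $ c * (\<Sum>i\<in>UNIV. x i $ r * x i $ c))"
      by (subst sum.swap) (simp add: sum_distrib_left ac_simps)
    also have "\<dots> = (\<Sum>c\<in>UNIV. if r = c then v $ c else 0)"
      by (rule sum.cong) (auto simp: ortho_complete[OF on])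
    also have "\<dots> = v $ r" by simp
    finally show ?thesis .
  qed
  then show ?thesis by (simp add: vec_eq_iff)
qed

lemma decomp_entry:
  assumes "spectral_decomp A l x"
  shows "A $ r $ c = (\<Sum>i\<in>UNIV. l i * x i $ r * x i $ c)"
  using assms unfolding spectral_decomp_def by (simp add: ac_simps)

lemma decomp_mulv:
  assumes "spectral_decomp A l x"
  shows "A *v v = (\<Sum>i\<in>UNIV. (l i * (x i \<bullet> v)) *\<^sub>R x i)"
proof -
  have "(A *v v) $ r = (\<Sum>i\<in>UNIV. l i * (x i \<bullet> v) * x i $ r)" for r
  proof -
    have "(A *v v) $ r = (\<Sum>c\<in>UNIV. (\<Sum>i\<in>UNIV. l i * x i $ r * x i $ c) * v $ c)"
      by (simp add: matrix_vector_mult_def decomp_entry[OF assms])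
    also have "\<dots> = (\<Sum>i\<in>UNIV. l i * (x i \<bullet> v) * x i $ r)"
      by (simp add: sum_distrib_right sum_distrib_left inner_vec_def ac_simps) (rule sum.swap)
    finally show ?thesis .
  qed
  then show ?thesis by (simp add: vec_eq_iff)
qed

lemma decomp_eigen:
  assumes "spectral_decomp A l x"
  shows "A *v x j = l j *\<^sub>R x j"
proof -
  have on: "\<forall>i j. x i \<bullet> x j = (if i = j then 1 else 0)" using assms spectral_decomp_def by blast
  have "(\<Sum>i\<in>UNIV. (l i * (x i \<bullet> x j)) *\<^sub>R x i) = (\<Sum>i\<in>UNIV. if i = j then l j *\<^sub>R x j else 0)"
    by (rule sum.cong) (use on in auto)
  then show ?thesis unfolding decomp_mulv[OF assms] by simp
qed




lemma sym_inner:
  fixes A :: "real^'n^'n"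
  assumes "transpose A = A"
  shows "(A *v x) \<bullet> y = x \<bullet> (A *v y)"
proof -
  have "x \<bullet> (A *v y) = (x v* A) \<bullet> y" by (simp add: dot_lmul_matrix)
  also have "x v* A = transpose A *v x" by simp
  finally show ?thesis using assms by simp
qed

lemma quad_scale:
  fixes A :: "real^'n^'n"
  shows "(c *\<^sub>R w) \<bullet> (A *v (c *\<^sub>R w)) = c^2 * (w \<bullet> (A *v w))"
  by (simp add: matrix_vector_mult_scaleR power2_eq_square)

lemma eigvec_exists:
  fixes A :: "real^'n^'n"
  assumes sym: "transpose A = A" and V: "subspace V" and inv: "\<forall>v\<in>V. A *v v \<in> V"
    and v0: "v0 \<in> V" "v0 \<noteq> 0"
  shows "\<exists>x\<in>V. norm x = 1 \<and> A *v x = (x \<bullet> (A *v x)) *\<^sub>R x"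
proof -
  define q where "q w = w \<bullet> (A *v w)" for w :: "real^'n"
  define S where "S = V \<inter> sphere 0 1"
  have cS: "compact S" unfolding S_def using closed_subspace[OF V]
    by (metis Int_commute compact_Int_closed compact_sphere)
  have "v0 /\<^sub>R norm v0 \<in> S" using v0 V unfolding S_def by (simp add: subspace_scale)
  then have neS: "S \<noteq> {}" by auto
  have cq: "continuous_on S q" unfolding q_def
    by (intro continuous_intros linear_continuous_on matrix_vector_mul_bounded_linear)
  obtain x0 where x0: "x0 \<in> S" "\<forall>y\<in>S. q y \<le> q x0"
    using continuous_attains_sup[OF cS neS cq] by blast
  define M where "M = q x0"
  have x0V: "x0 \<in> V" and nx0: "norm x0 = 1" using x0 S_def by auto
  have x0x0: "x0 \<bullet> x0 = 1" using nx0 by (simp add: dot_square_norm)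
  have bound: "q w \<le> M * (w \<bullet> w)" if "w \<in> V" for w
  proof (cases "w = 0")
    case True then show ?thesis by (simp add: q_def)
  next
    case False
    have "w /\<^sub>R norm w \<in> S" using that False V unfolding S_def by (simp add: subspace_scale)
    then have "q (w /\<^sub>R norm w) \<le> M" using x0 M_def by auto
    moreover have "q (w /\<^sub>R norm w) = q w / (norm w)^2"
      unfolding q_def quad_scale by (simp add: power_divide field_simps)
    ultimately have "q w / (norm w)^2 \<le> M" by simp
    moreover have "(norm w)^2 > 0" using False by simp
    ultimately have "q w \<le> M * (norm w)^2" by (simp add: field_simps)
    then show ?thesis by (simp add: dot_square_norm)
  qed
  have orth: "x0 \<bullet> (A *v y) = 0" if yV: "y \<in> V" and xy: "x0 \<bullet> y = 0" for y
  proof (rule ccontr)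
    define b where "b = x0 \<bullet> (A *v y)"
    assume "\<not> ?thesis" then have b0: "b \<noteq> 0" using b_def by simp
    define K where "K = M * (y \<bullet> y) - q y"
    have ineq: "2 * s * b \<le> s^2 * K" for s
    proof -
      have wV: "x0 + s *\<^sub>R y \<in> V" using x0V yV V by (simp add: subspace_add subspace_scale)
      have "q (x0 + s *\<^sub>R y) = M + 2 * s * b + s^2 * q y"
        unfolding q_def M_def b_def
        using sym_inner[OF sym, of y x0]
        by (simp add: matrix_vector_right_distrib matrix_vector_mult_scaleR inner_add_left inner_add_right
            algebra_simps power2_eq_square inner_commute)
      moreover have "(x0 + s *\<^sub>R y) \<bullet> (x0 + s *\<^sub>R y) = 1 + s^2 * (y \<bullet> y)"
        using x0x0 xy by (simp add: inner_add_left inner_add_right algebra_simps power2_eq_square inner_commute)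
      ultimately show ?thesis using bound[OF wV] unfolding K_def by (simp add: algebra_simps)
    qed
    define D where "D = \<bar>K\<bar> + 1"
    have Dp: "D > 0" unfolding D_def by simp
    have "2 * (b / D) * b \<le> (b / D)^2 * K" using ineq .
    then have "2 * b^2 * D \<le> b^2 * K"
      using Dp by (simp add: field_simps power2_eq_square)
    moreover have "b^2 * K \<le> b^2 * \<bar>K\<bar>" by (simp add: mult_left_mono)
    moreover have "b^2 > 0" using b0 by simp
    moreover have "b^2 * \<bar>K\<bar> = b^2 * D - b^2" by (simp add: D_def algebra_simps)
    ultimately have "b^2 * D \<le> -(b^2)" by linarith
    moreover have "b^2 * D > 0" using Dp \<open>b^2 > 0\<close> by simp
    ultimately show False using \<open>b^2 > 0\<close> by linarith
  qed
  define z where "z = A *v x0 - M *\<^sub>R x0"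
  have zV: "z \<in> V" unfolding z_def using inv x0V V by (simp add: subspace_diff subspace_scale)
  have xz: "x0 \<bullet> z = 0" unfolding z_def M_def q_def using x0x0 by (simp add: inner_diff_right)
  have "x0 \<bullet> (A *v z) = 0" using orth[OF zV xz] .
  then have "(A *v x0) \<bullet> z = 0" using sym_inner[OF sym] by simp
  moreover have "A *v x0 = z + M *\<^sub>R x0" unfolding z_def by simp
  ultimately have "(z + M *\<^sub>R x0) \<bullet> z = 0" by simp
  then have "z \<bullet> z + M * (x0 \<bullet> z) = 0" by (simp add: inner_add_left)
  then have "z \<bullet> z = 0" using xz by simp
  then have "z = 0" by simp
  then have "A *v x0 = M *\<^sub>R x0" unfolding z_def by simp
  then show ?thesis using x0V nx0 M_def q_def by auto
qed




lemma eig_set: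
  fixes A :: "real^'n^'n"
  assumes sym: "transpose A = A"
  shows "k \<le> CARD('n) \<Longrightarrow> \<exists>E. finite E \<and> card E = k \<and>
     (\<forall>e\<in>E. \<forall>e'\<in>E. e \<bullet> e' = (if e = e' then 1 else 0)) \<and>
     (\<forall>e\<in>E. A *v e = (e \<bullet> (A *v e)) *\<^sub>R e)"
proof (induction k)
  case 0
  then show ?case by (intro exI[of _ "{}"]) auto
next
  case (Suc k)
  then obtain E where E: "finite E" "card E = k"
     "\<forall>e\<in>E. \<forall>e'\<in>E. e \<bullet> e' = (if e = e' then 1 else 0)"
     "\<forall>e\<in>E. A *v e = (e \<bullet> (A *v e)) *\<^sub>R e" by auto
  have "span E \<noteq> UNIV"
  proof
    assume "span E = UNIV"
    then have "dim (UNIV :: (real^'n) set) \<le> card E" using dim_le_card[of UNIV E] E(1) by simp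
    then show False using E(2) Suc.prems by simp
  qed
  then obtain y where y: "y \<notin> span E" by auto
  define V where "V = {v. \<forall>e\<in>E. e \<bullet> v = 0}"
  have V: "subspace V" unfolding V_def subspace_def
    by (auto simp: inner_add_right)
  have inv: "\<forall>v\<in>V. A *v v \<in> V"
  proof
    fix v assume "v \<in> V"
    have "e \<bullet> (A *v v) = 0" if eE: "e \<in> E" for e
    proof -
      have "e \<bullet> (A *v v) = (A *v e) \<bullet> v" using sym_inner[OF sym, of e v] by simp
      also have "\<dots> = (e \<bullet> (A *v e)) * (e \<bullet> v)"
        by (subst E(4)[rule_format, OF eE]) simp
      also have "\<dots> = 0" using \<open>v \<in> V\<close> eE unfolding V_def by simp
      finally show ?thesis .
    qed
    then have "\<forall>e\<in>E. e \<bullet> (A *v v) = 0" by blast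
    then show "A *v v \<in> V" unfolding V_def by simp
  qed
  define r where "r = y - (\<Sum>e\<in>E. (e \<bullet> y) *\<^sub>R e)"
  have rV: "r \<in> V"
  proof -
    have "e' \<bullet> r = 0" if "e' \<in> E" for e'
    proof -
      have "e' \<bullet> (\<Sum>e\<in>E. (e \<bullet> y) *\<^sub>R e) = (\<Sum>e\<in>E. (e \<bullet> y) * (e' \<bullet> e))"
        by (simp add: inner_sum_right)
      also have "\<dots> = (\<Sum>e\<in>E. if e = e' then e' \<bullet> y else 0)"
        by (rule sum.cong) (use E(3) that in auto)
      also have "\<dots> = e' \<bullet> y" using E(1) that by simp
      finally show ?thesis unfolding r_def by (simp add: inner_diff_right)
    qed
    then show ?thesis unfolding V_def by simp
  qed
  have r0: "r \<noteq> 0"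
  proof
    assume "r = 0"
    then have "y = (\<Sum>e\<in>E. (e \<bullet> y) *\<^sub>R e)" unfolding r_def by simp
    moreover have "(\<Sum>e\<in>E. (e \<bullet> y) *\<^sub>R e) \<in> span E"
      by (intro span_sum span_mul span_base)
    ultimately show False using y by simp
  qed
  obtain x where x: "x \<in> V" "norm x = 1" "A *v x = (x \<bullet> (A *v x)) *\<^sub>R x"
    using eigvec_exists[OF sym V inv rV r0] by blast
  have xx: "x \<bullet> x = 1" using x(2) by (simp add: dot_square_norm)
  have xE: "x \<notin> E" using x(1) xx unfolding V_def by auto
  have xe: "\<forall>e\<in>E. x \<bullet> e = 0 \<and> e \<bullet> x = 0" using x(1) unfolding V_def by (simp add: inner_commute)
  show ?case
    apply (intro exI[of _ "insert x E"])
    using E xE xe xx x(3) by auto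
qed

lemma spectral_exists:
  fixes A :: "real^'n^'n"
  assumes sym: "transpose A = A"
  shows "\<exists>l x. spectral_decomp A l x"
proof -
  obtain E where E: "finite E" "card E = CARD('n)"
     "\<forall>e\<in>E. \<forall>e'\<in>E. e \<bullet> e' = (if e = e' then 1 else 0)"
     "\<forall>e\<in>E. A *v e = (e \<bullet> (A *v e)) *\<^sub>R e"
    using eig_set[OF sym, of "CARD('n)"] by auto
  obtain h where h: "bij_betw h (UNIV :: 'n set) E"
    using finite_same_card_bij[of "UNIV :: 'n set" E] E by auto
  define l where "l i = h i \<bullet> (A *v h i)" for i
  have hE: "h i \<in> E" for i using h bij_betwE by blast
  have on: "\<forall>i j. h i \<bullet> h j = (if i = j then 1 else 0)"
    using E(3) hE h by (auto simp: bij_betw_def inj_on_def)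
  have eig: "A *v h i = l i *\<^sub>R h i" for i using E(4) hE l_def by auto
  have "A $ r $ c = (\<Sum>i\<in>UNIV. l i * h i $ r * h i $ c)" for r c
  proof -
    have "(\<Sum>i\<in>UNIV. l i * h i $ r * h i $ c) = (\<Sum>i\<in>UNIV. (A *v h i) $ r * h i $ c)"
      using eig by simp
    also have "\<dots> = (\<Sum>i\<in>UNIV. \<Sum>k\<in>UNIV. A $ r $ k * (h i $ k * h i $ c))"
      by (simp add: matrix_vector_mult_def sum_distrib_right mult.assoc)
    also have "\<dots> = (\<Sum>k\<in>UNIV. A $ r $ k * (\<Sum>i\<in>UNIV. h i $ k * h i $ c))"
      by (subst sum.swap) (simp add: sum_distrib_left)
    also have "\<dots> = (\<Sum>k\<in>UNIV. if k = c then A $ r $ k else 0)"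
      by (rule sum.cong) (auto simp: ortho_complete[OF on])
    also have "\<dots> = A $ r $ c" by simp
    finally show ?thesis by simp
  qed
  then have "A = (\<Sum>i\<in>UNIV. l i *\<^sub>R outer_prod (h i))"
    by (simp add: vec_eq_iff ac_simps)
  then show ?thesis using on unfolding spectral_decomp_def by blast
qed




definition Mm :: "('n::finite \<Rightarrow> nat) \<Rightarrow> real^'n^'n" where
  "Mm idx = (\<chi> i j. if idx j = idx i \<or> idx j = Suc (idx i) then 1 else 0)"

definition Am :: "('n::finite \<Rightarrow> nat) \<Rightarrow> real^'n^'n" where
  "Am idx = Mm idx ** transpose (Mm idx) + mat 1"

lemma Am_entry: "Am idx $ i $ j = (\<Sum>k\<in>UNIV. Mm idx $ i $ k * Mm idx $ j $ k) + (if i = j then 1 else 0)"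
  by (simp add: Am_def matrix_matrix_mult_def transpose_def mat_def)

lemma Mm_nonneg: "Mm idx $ i $ j \<ge> 0" by (simp add: Mm_def)

lemma Am_nonneg: "Am idx $ i $ j \<ge> 0"
  unfolding Am_entry by (intro add_nonneg_nonneg sum_nonneg mult_nonneg_nonneg Mm_nonneg) auto

lemma Am_zero:
  assumes "Suc (idx i) < idx j \<or> Suc (idx j) < idx i"
  shows "Am idx $ i $ j = 0"
proof -
  have "i \<noteq> j" using assms by auto
  moreover have "(\<Sum>k\<in>UNIV. Mm idx $ i $ k * Mm idx $ j $ k) = 0"
    using assms by (intro sum.neutral) (auto simp: Mm_def)
  ultimately show ?thesis unfolding Am_entry by simp
qed

lemma Am_diag: "Am idx $ i $ i \<ge> 1"
proof -
  have "(\<Sum>k\<in>UNIV. Mm idx $ i $ k * Mm idx $ i $ k) \<ge> 0"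
    by (intro sum_nonneg mult_nonneg_nonneg Mm_nonneg)
  then show ?thesis unfolding Am_entry by simp
qed

lemma Am_next:
  assumes "idx j = Suc (idx i)"
  shows "Am idx $ i $ j \<ge> 1"
proof -
  have "Mm idx $ i $ j * Mm idx $ j $ j \<le> (\<Sum>k\<in>UNIV. Mm idx $ i $ k * Mm idx $ j $ k)"
    by (rule member_le_sum) (auto intro: mult_nonneg_nonneg Mm_nonneg)
  moreover have "Mm idx $ i $ j * Mm idx $ j $ j = 1" using assms by (simp add: Mm_def)
  ultimately show ?thesis unfolding Am_entry using assms by auto
qed

lemma Am_sym: "transpose (Am idx) = Am idx"
  by (simp add: vec_eq_iff transpose_def Am_entry mult.commute eq_commute)

lemma Am_quad: "x \<bullet> (Am idx *v x) \<ge> x \<bullet> x"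
proof -
  let ?M = "Mm idx"
  have "Am idx *v x = ?M *v (transpose ?M *v x) + x"
    by (simp add: Am_def matrix_vector_mult_add_rdistrib matrix_vector_mul_assoc del: transpose_matrix_vector)
  then have "x \<bullet> (Am idx *v x) = x \<bullet> (?M *v (transpose ?M *v x)) + x \<bullet> x"
    by (simp add: inner_add_right)
  also have "x \<bullet> (?M *v (transpose ?M *v x)) = (x v* ?M) \<bullet> (transpose ?M *v x)"
    by (simp only: dot_lmul_matrix)
  also have "x v* ?M = transpose ?M *v x" by simp
  finally show ?thesis by simp
qed

lemma Am_dnn: "doubly_nonnegative (Am idx)"
  unfolding doubly_nonnegative_def using Am_sym Am_nonneg Am_quad
  by (meson inner_ge_zero order_trans)




lemma iter_supp:
  fixes idx :: "'n::finite \<Rightarrow> nat"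
  assumes b: "idx b = CARD('n) - 1"
  shows "\<forall>i. CARD('n) - 1 - idx i > k \<longrightarrow> (((\<lambda>w. Am idx *v w) ^^ k) (axis b 1)) $ i = 0"
proof (induction k)
  case 0
  then show ?case using b by (auto simp: axis_def)
next
  case (Suc k)
  show ?case
  proof (intro allI impI)
    fix i assume di: "CARD('n) - 1 - idx i > Suc k"
    let ?w = "((\<lambda>w. Am idx *v w) ^^ k) (axis b 1)"
    have "Am idx $ i $ j * ?w $ j = 0" for j
    proof (cases "Suc (idx i) < idx j \<or> Suc (idx j) < idx i")
      case True then show ?thesis using Am_zero[OF True] by simp
    next
      case False
      then have "CARD('n) - 1 - idx j > k" using di by arith
      then show ?thesis using Suc.IH by simp
    qed
    then have "(\<Sum>j\<in>UNIV. Am idx $ i $ j * ?w $ j) = 0" by (intro sum.neutral) blast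
    moreover have "(((\<lambda>w. Am idx *v w) ^^ Suc k) (axis b 1)) $ i = (\<Sum>j\<in>UNIV. Am idx $ i $ j * ?w $ j)"
      by (simp only: funpow.simps comp_apply matrix_vector_mult_def vec_lambda_beta)
    ultimately show "(((\<lambda>w. Am idx *v w) ^^ Suc k) (axis b 1)) $ i = 0" by simp
  qed
qed

lemma iter_pos:
  fixes idx :: "'n::finite \<Rightarrow> nat"
  assumes bij: "bij_betw idx UNIV {0..<CARD('n)}" and b: "idx b = CARD('n) - 1"
  shows "\<forall>i. (((\<lambda>w. Am idx *v w) ^^ k) (axis b 1)) $ i \<ge> 0 \<and>
     (CARD('n) - 1 - idx i \<le> k \<longrightarrow> (((\<lambda>w. Am idx *v w) ^^ k) (axis b 1)) $ i > 0)"
proof (induction k)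
  case 0
  have "i = b" if "CARD('n) - 1 - idx i \<le> 0" for i
  proof -
    have "idx i < CARD('n)" using bij by (auto simp: bij_betw_def)
    then have "idx i = idx b" using that b by simp
    then show ?thesis using bij by (auto simp: bij_betw_def inj_on_def)
  qed
  then show ?case by (auto simp: axis_def)
next
  case (Suc k)
  let ?w = "((\<lambda>w. Am idx *v w) ^^ k) (axis b 1)"
  have eq: "(((\<lambda>w. Am idx *v w) ^^ Suc k) (axis b 1)) $ i = (\<Sum>j\<in>UNIV. Am idx $ i $ j * ?w $ j)" for i
    by (simp only: funpow.simps comp_apply matrix_vector_mult_def vec_lambda_beta)
  have tnn: "Am idx $ i $ j * ?w $ j \<ge> 0" for i j
  proof -
    have "?w $ j \<ge> 0" using Suc.IH by blast
    then show ?thesis using Am_nonneg by (intro mult_nonneg_nonneg)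
  qed
  show ?case
  proof (intro allI conjI impI)
    fix i
    show "(((\<lambda>w. Am idx *v w) ^^ Suc k) (axis b 1)) $ i \<ge> 0"
      unfolding eq by (intro sum_nonneg tnn)
    assume di: "CARD('n) - 1 - idx i \<le> Suc k"
    obtain j where j: "Am idx $ i $ j * ?w $ j > 0"
    proof (cases "CARD('n) - 1 - idx i \<le> k")
      case True
      have "Am idx $ i $ i * ?w $ i > 0" using Am_diag[of idx i] Suc.IH True
        by (intro mult_pos_pos) auto
      then show ?thesis using that by blast
    next
      case False
      have lt: "Suc (idx i) < CARD('n)" using False by arith
      then have "Suc (idx i) \<in> idx ` UNIV" using bij by (simp add: bij_betw_def)
      then obtain j where jj: "idx j = Suc (idx i)" by auto
      have "CARD('n) - 1 - idx j \<le> k" using jj di by arith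
      then have "Am idx $ i $ j * ?w $ j > 0" using Am_next[OF jj] Suc.IH
        by (intro mult_pos_pos) auto
      then show ?thesis using that by blast
    qed
    have "Am idx $ i $ j * ?w $ j \<le> (\<Sum>j\<in>UNIV. Am idx $ i $ j * ?w $ j)"
      by (rule member_le_sum) (auto intro: tnn)
    then show "(((\<lambda>w. Am idx *v w) ^^ Suc k) (axis b 1)) $ i > 0"
      unfolding eq using j by simp
  qed
qed




theorem theorem3p2:
  shows "critical_exponent TYPE('n::finite) \<ge> ereal (real CARD('n) - 2)"
  unfolding critical_exponent_def
proof (rule Inf_greatest)
  fix e assume "e \<in> ereal ` {m. 0 < m \<and>
      (\<forall>t\<ge>m. \<forall>A::real^'n^'n. doubly_nonnegative A \<longrightarrow> doubly_nonnegative (mat_rpow A t))}"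
  then obtain m where e: "e = ereal m" and m0: "0 < m"
    and P: "\<forall>t\<ge>m. \<forall>A::real^'n^'n. doubly_nonnegative A \<longrightarrow> doubly_nonnegative (mat_rpow A t)"
    by auto
  define N where "N = CARD('n)"
  show "ereal (real CARD('n) - 2) \<le> e"
  proof (rule ccontr)
    assume "\<not> ?thesis"
    then have mlt: "m < real N - 2" using e N_def by simp
    then have N3: "N \<ge> 3" using m0 by linarith
    obtain idx :: "'n \<Rightarrow> nat" where bij: "bij_betw idx UNIV {0..<N}"
      using ex_bij_betw_finite_nat[of "UNIV :: 'n set"] N_def by auto
    have "0 \<in> idx ` UNIV" "N - 1 \<in> idx ` UNIV" using bij N3 by (auto simp: bij_betw_def)
    then obtain a b where a: "idx a = 0" and b: "idx b = N - 1" by (metis imageE)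
    define A where "A = Am idx"
    define t where "t = (max m (real N - 3) + (real N - 2)) / 2"
    have tm: "t \<ge> m" and t1: "real N - 3 < t" and t2: "t < real N - 2"
      using mlt unfolding t_def by auto
    have "doubly_nonnegative (mat_rpow A t)" using P tm Am_dnn A_def by blast
    then have entry_nn: "mat_rpow A t $ a $ b \<ge> 0" unfolding doubly_nonnegative_def by blast
    have symA: "transpose A = A" unfolding A_def by (rule Am_sym)
    have lge: "l i \<ge> 1" if sd: "spectral_decomp A l x" for l x i
    proof -
      have on: "x i \<bullet> x i = 1" using sd unfolding spectral_decomp_def by simp
      have "l i = x i \<bullet> (A *v x i)" using decomp_eigen[OF sd, of i] on by simp
      then show ?thesis using Am_quad[of "x i" idx] on A_def by simp
    qed
    obtain l0 x0 where sd0: "spectral_decomp A l0 x0" using spectral_exists[OF symA] by blast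
    have "\<exists>B. \<exists>l x. spectral_decomp A l x \<and> (\<forall>i. 0 \<le> l i) \<and>
                     B = (\<Sum>i\<in>UNIV. (l i powr t) *\<^sub>R outer_prod (x i))"
      using sd0 lge[OF sd0] by (meson order_trans zero_le_one)
    from someI_ex[OF this] obtain l x where sd: "spectral_decomp A l x"
      and Bdef: "mat_rpow A t = (\<Sum>i\<in>UNIV. (l i powr t) *\<^sub>R outer_prod (x i))"
      unfolding mat_rpow_def by blast
    have on: "\<forall>i j. x i \<bullet> x j = (if i = j then 1 else 0)" using sd spectral_decomp_def by blast
    have lp: "l i > 0" for i using lge[OF sd, of i] by simp
    define w where "w i = x i $ a * x i $ b" for i
    have entry: "mat_rpow A t $ a $ b = (\<Sum>i\<in>UNIV. w i * exp (ln (l i) * t))"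
      unfolding Bdef w_def using lp by (simp add: powr_def ac_simps less_imp_neq[symmetric])
    have iter: "((\<lambda>v. A *v v) ^^ k) (axis b 1) = (\<Sum>i\<in>UNIV. (l i ^ k * x i $ b) *\<^sub>R x i)" for k
    proof (induction k)
      case 0
      show ?case using ortho_expand[OF on, of "axis b 1"] by (simp add: inner_axis)
    next
      case (Suc k)
      have "A *v (\<Sum>i\<in>UNIV. (l i ^ k * x i $ b) *\<^sub>R x i) = (\<Sum>i\<in>UNIV. (l i ^ k * x i $ b) *\<^sub>R (A *v x i))"
        by (simp add: linear_sum[OF matrix_vector_mul_linear] matrix_vector_mult_scaleR)
      also have "\<dots> = (\<Sum>i\<in>UNIV. (l i ^ Suc k * x i $ b) *\<^sub>R x i)"
        using decomp_eigen[OF sd] by (simp add: ac_simps)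
      finally show ?case using Suc by simp
    qed
    have fk: "(\<Sum>i\<in>UNIV. w i * exp (ln (l i) * real k)) = (((\<lambda>v. A *v v) ^^ k) (axis b 1)) $ a" for k
    proof -
      have "exp (ln (l i) * real k) = l i ^ k" for i
      proof -
        have "exp (ln (l i) * real k) = exp (ln (l i)) ^ k"
          by (simp add: exp_of_nat_mult[symmetric] mult.commute)
        then show ?thesis using lp[of i] by simp
      qed
      then show ?thesis unfolding iter w_def by (simp add: ac_simps)
    qed
    define S where "S = l ` UNIV"
    define c where "c \<mu> = (\<Sum>i\<in>{i\<in>UNIV. l i = \<mu>}. w i)" for \<mu>
    define g where "g = (\<lambda>t. \<Sum>\<mu>\<in>S. c \<mu> * exp (ln \<mu> * t))"
    have gsum: "g s = (\<Sum>i\<in>UNIV. w i * exp (ln (l i) * s))" for s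
    proof -
      have "(\<Sum>i\<in>UNIV. w i * exp (ln (l i) * s)) =
          (\<Sum>\<mu>\<in>S. \<Sum>i\<in>{i\<in>UNIV. l i = \<mu>}. w i * exp (ln (l i) * s))"
        unfolding S_def by (rule sum.image_gen) simp
      also have "\<dots> = (\<Sum>\<mu>\<in>S. c \<mu> * exp (ln \<mu> * s))"
        unfolding c_def sum_distrib_right by (intro sum.cong refl) auto
      finally show ?thesis unfolding g_def by simp
    qed
    have injS: "inj_on ln S" unfolding S_def using lp
      by (auto simp: inj_on_def)
    have cardS: "card S \<le> N" unfolding S_def N_def by (rule card_image_le) simp
    have zeros: "g (real k) = 0" if "k \<le> N - 2" for k
    proof -
      have "N - 1 - idx a > k" using a that N3 by simp
      then show ?thesis using gsum fk iter_supp[of idx b k] b N_def A_def by simp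
    qed
    have pos: "g (real N - 1) > 0"
    proof -
      have "N - 1 - idx a \<le> N - 1" by simp
      then have "(((\<lambda>v. A *v v) ^^ (N - 1)) (axis b 1)) $ a > 0"
        using iter_pos[of idx b "N - 1"] bij b N_def A_def by simp
      moreover have "real N - 1 = real (N - 1)" using N3 by (simp add: of_nat_diff)
      moreover have "g (real (N - 1)) = (((\<lambda>v. A *v v) ^^ (N - 1)) (axis b 1)) $ a"
        by (simp only: gsum fk)
      ultimately show ?thesis by metis
    qed
    have fS: "finite S" unfolding S_def by simp
    have N2: "N \<ge> 2" using N3 by simp
    have "g t < 0"
      by (rule sign_lemma[of S ln N g c, OF fS injS cardS N2 g_def zeros pos t1 t2])
    moreover have "g t = mat_rpow A t $ a $ b" using entry gsum by simp
    ultimately show False using entry_nn by simp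
  qed
qed


end
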